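(* Let $\mathcal{X},\mathcal{Y},\mathcal{Z}$ be finite alphabets and $(X,Y,Z)\sim P_X(x)P_{Y|X}(y|x)P_{Z|X}(z|x)$. Define $\mathcal{A}_1$ as the set of all tuples $(R_I,R_S,R_J,R_L)$ such that, for some random variable $U$ on a finite alphabet $\mathcal{U}$ with $|\mathcal{U}|\le|\mathcal{Y}|+2$ forming a Markov chain $Z-X-Y-U$, $R_I+R_S\le I(Z;U)$, $R_J\ge I(Y;U)-I(Z;U)+R_I$, $R_L\ge I(X;U)-I(Z;U)+R_I$, $R_I\ge0$, $R_S\ge0$. Define $\mathcal{A}_2$ as the set of all tuples $(R_I,R_S,R_J,R_L)$ such that, for some random variables $U,V$ on finite alphabets $\mathcal{U},\mathcal{V}$ with $|\mathcal{U}|\le(|\mathcal{Y}|+2)(|\mathcal{Y}|+3)$ and $|\mathcal{V}|\le|\mathcal{Y}|+3$ forming a Markov chain $Z-X-Y-U-V$, $0\le R_I\le I(Z;V)$, $0\le R_S\le I(Z;U)-I(Z;V)$, $R_J\ge I(Y;U)-I(Z;U)+I(Z;V)$, $R_L\ge I(X;U)-I(Z;U)+I(Z;V)$. Then $\mathcal{A}_1=\mathcal{A}_2$.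
   Context: $P_X$ is a distribution on the finite set $\mathcal{X}$ and $P_{Y|X}$, $P_{Z|X}$ are channels from $\mathcal{X}$ to finite sets $\mathcal{Y}$, $\mathcal{Z}$. $I$ denotes mutual information (base-2 logarithms). *)

theory Defs
  imports Complex_Main
begin

definition mutinf :: "'a set \<Rightarrow> 'b set \<Rightarrow> ('a \<Rightarrow> 'b \<Rightarrow> real) \<Rightarrow> real" where
  "mutinf A B p = (\<Sum>a\<in>A. \<Sum>b\<in>B. if p a b = 0 then 0 else
      p a b * log 2 (p a b / ((\<Sum>b'\<in>B. p a b') * (\<Sum>a'\<in>A. p a' b))))"

definition is_pmf :: "'a set \<Rightarrow> ('a \<Rightarrow> real) \<Rightarrow> bool" where
  "is_pmf A P \<longleftrightarrow> (\<forall>a\<in>A. P a \<ge> 0) \<and> sum P A = 1"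

definition is_channel :: "'a set \<Rightarrow> 'b set \<Rightarrow> ('a \<Rightarrow> 'b \<Rightarrow> real) \<Rightarrow> bool" where
  "is_channel A B W \<longleftrightarrow> (\<forall>a\<in>A. is_pmf B (W a))"

text \<open>The Markov chain Z - X - Y - U (- V) with the
  fixed joint law P_X P_{Y|X} P_{Z|X} means U is produced from Y by a channel Q, and V from U
  by a channel S.\<close>

definition A1 :: "('x::finite \<Rightarrow> real) \<Rightarrow> ('x \<Rightarrow> 'y::finite \<Rightarrow> real) \<Rightarrow> ('x \<Rightarrow> 'z::finite \<Rightarrow> real)
    \<Rightarrow> (real \<times> real \<times> real \<times> real) set" where
  "A1 PX PY PZ = {(RI, RS, RJ, RL). \<exists>k::nat. \<exists>Q :: 'y \<Rightarrow> nat \<Rightarrow> real.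
     k \<le> card (UNIV :: 'y set) + 2 \<and> is_channel UNIV {..<k} Q \<and>
     (let IZU = mutinf UNIV {..<k} (\<lambda>z u. \<Sum>x\<in>UNIV. \<Sum>y\<in>UNIV. PX x * PZ x z * PY x y * Q y u);
          IYU = mutinf UNIV {..<k} (\<lambda>y u. \<Sum>x\<in>UNIV. PX x * PY x y * Q y u);
          IXU = mutinf UNIV {..<k} (\<lambda>x u. \<Sum>y\<in>UNIV. PX x * PY x y * Q y u)
      in RI + RS \<le> IZU \<and> RJ \<ge> IYU - IZU + RI \<and> RL \<ge> IXU - IZU + RI \<and> RI \<ge> 0 \<and> RS \<ge> 0)}"

definition A2 :: "('x::finite \<Rightarrow> real) \<Rightarrow> ('x \<Rightarrow> 'y::finite \<Rightarrow> real) \<Rightarrow> ('x \<Rightarrow> 'z::finite \<Rightarrow> real)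
    \<Rightarrow> (real \<times> real \<times> real \<times> real) set" where
  "A2 PX PY PZ = {(RI, RS, RJ, RL). \<exists>k m::nat. \<exists>Q :: 'y \<Rightarrow> nat \<Rightarrow> real. \<exists>S :: nat \<Rightarrow> nat \<Rightarrow> real.
     k \<le> (card (UNIV :: 'y set) + 2) * (card (UNIV :: 'y set) + 3) \<and> m \<le> card (UNIV :: 'y set) + 3 \<and>
     is_channel UNIV {..<k} Q \<and> is_channel {..<k} {..<m} S \<and>
     (let IZU = mutinf UNIV {..<k} (\<lambda>z u. \<Sum>x\<in>UNIV. \<Sum>y\<in>UNIV. PX x * PZ x z * PY x y * Q y u);
          IZV = mutinf UNIV {..<m} (\<lambda>z v. \<Sum>x\<in>UNIV. \<Sum>y\<in>UNIV. \<Sum>u<k. PX x * PZ x z * PY x y * Q y u * S u v);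
          IYU = mutinf UNIV {..<k} (\<lambda>y u. \<Sum>x\<in>UNIV. PX x * PY x y * Q y u);
          IXU = mutinf UNIV {..<k} (\<lambda>x u. \<Sum>y\<in>UNIV. PX x * PY x y * Q y u)
      in 0 \<le> RI \<and> RI \<le> IZV \<and> 0 \<le> RS \<and> RS \<le> IZU - IZV \<and>
         RJ \<ge> IYU - IZU + IZV \<and> RL \<ge> IXU - IZU + IZV)}"

end

theory Submission
  imports Defs "HOL-Analysis.Analysis"
begin

lemma family_dependent:
  fixes v :: "nat \<Rightarrow> 'v::euclidean_space"
  assumes "finite S" "card S > DIM('v)"
  shows "\<exists>c. (\<exists>u\<in>S. c u \<noteq> 0) \<and> (\<Sum>u\<in>S. c u *\<^sub>R v u) = 0"
proof (cases "inj_on v S")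
  case True
  have ci: "card (v ` S) = card S" by (rule card_image[OF True])
  have "dependent (v ` S)" by (rule dependent_biggerset) (use ci assms in simp)
  then have "\<exists>w. (\<exists>x\<in>v ` S. w x \<noteq> 0) \<and> (\<Sum>x\<in>v ` S. w x *\<^sub>R x) = 0"
    using dependent_finite[of "v ` S"] assms(1) by simp
  then obtain w where w: "\<exists>x\<in>v ` S. w x \<noteq> 0" "(\<Sum>x\<in>v ` S. w x *\<^sub>R x) = 0" by blast
  have "(\<Sum>u\<in>S. w (v u) *\<^sub>R v u) = (\<Sum>x\<in>v ` S. w x *\<^sub>R x)"
    by (rule sum.reindex_bij_betw[OF inj_on_imp_bij_betw[OF True]])
  hence "(\<Sum>u\<in>S. w (v u) *\<^sub>R v u) = 0" using w(2) by simp
  moreover have "\<exists>u\<in>S. w (v u) \<noteq> 0" using w(1) by auto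
  ultimately show ?thesis by (intro exI[of _ "\<lambda>u. w (v u)"] conjI)
next
  case False
  then obtain a b where ab: "a \<in> S" "b \<in> S" "a \<noteq> b" "v a = v b" unfolding inj_on_def by blast
  define c where "c u = (if u = a then 1 else if u = b then -1 else (0::real))" for u
  have "(\<Sum>u\<in>S. c u *\<^sub>R v u) = (\<Sum>u\<in>{a,b}. c u *\<^sub>R v u)"
    by (rule sum.mono_neutral_right) (use assms ab in \<open>auto simp: c_def\<close>)
  also have "\<dots> = 0" using ab by (simp add: c_def)
  finally show ?thesis using ab by (intro exI[of _ c]) (auto simp: c_def)
qed

lemma reduce_step:
  fixes v :: "nat \<Rightarrow> 'v::euclidean_space"
  assumes K: "finite K" and a0: "\<forall>u\<in>K. \<alpha> u \<ge> 0" and pos: "\<forall>u\<in>K. v u \<bullet> e > 0"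
    and big: "card {u\<in>K. \<alpha> u \<noteq> 0} > DIM('v)"
  shows "\<exists>\<alpha>'. (\<forall>u\<in>K. \<alpha>' u \<ge> 0) \<and> (\<Sum>u\<in>K. \<alpha>' u *\<^sub>R v u) = (\<Sum>u\<in>K. \<alpha> u *\<^sub>R v u)
     \<and> (\<Sum>u\<in>K. \<alpha> u * g u) \<le> (\<Sum>u\<in>K. \<alpha>' u * g u)
     \<and> card {u\<in>K. \<alpha>' u \<noteq> 0} < card {u\<in>K. \<alpha> u \<noteq> 0}"
proof -
  define S where "S = {u\<in>K. \<alpha> u \<noteq> 0}"
  have fS: "finite S" using K by (simp add: S_def)
  obtain c0 where c0: "\<exists>u\<in>S. c0 u \<noteq> 0" "(\<Sum>u\<in>S. c0 u *\<^sub>R v u) = 0"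
    using family_dependent[OF fS] big S_def by blast
  define c1 where "c1 u = (if u \<in> S then c0 u else 0)" for u
  have SK: "S \<subseteq> K" by (auto simp: S_def)
  have c1v: "(\<Sum>u\<in>K. c1 u *\<^sub>R v u) = 0"
  proof -
    have "(\<Sum>u\<in>K. c1 u *\<^sub>R v u) = (\<Sum>u\<in>S. c1 u *\<^sub>R v u)"
      by (rule sum.mono_neutral_right) (use K SK in \<open>auto simp: c1_def\<close>)
    thus ?thesis using c0 by (simp add: c1_def)
  qed
  have c1out: "\<forall>u. u \<notin> S \<longrightarrow> c1 u = 0" by (simp add: c1_def)
  have c1nz: "\<exists>u\<in>S. c1 u \<noteq> 0" using c0 by (auto simp: c1_def)
  define c where "c = (if (\<Sum>u\<in>K. c1 u * g u) \<ge> 0 then c1 else (\<lambda>u. - c1 u))"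
  have cv: "(\<Sum>u\<in>K. c u *\<^sub>R v u) = 0" using c1v
    by (auto simp: c_def sum_negf)
  have cg: "(\<Sum>u\<in>K. c u * g u) \<ge> 0" by (auto simp: c_def sum_negf)
  have cout: "\<forall>u. u \<notin> S \<longrightarrow> c u = 0" using c1out by (simp add: c_def)
  have cnz: "\<exists>u\<in>S. c u \<noteq> 0" using c1nz by (auto simp: c_def)
  have ce: "(\<Sum>u\<in>K. c u * (v u \<bullet> e)) = 0"
  proof -
    have "(\<Sum>u\<in>K. c u *\<^sub>R v u) \<bullet> e = 0" using cv by simp
    thus ?thesis by (simp add: inner_sum_left)
  qed
  have "\<exists>u\<in>K. c u < 0"
  proof (rule ccontr)
    assume ncon: "\<not> (\<exists>u\<in>K. c u < 0)"
    have nn: "\<forall>u\<in>K. c u * (v u \<bullet> e) \<ge> 0"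
    proof
      fix u assume "u \<in> K"
      hence "c u \<ge> 0" "v u \<bullet> e > 0" using ncon pos by auto
      thus "c u * (v u \<bullet> e) \<ge> 0" by simp
    qed
    have "\<forall>u\<in>K. c u * (v u \<bullet> e) = 0"
      using sum_nonneg_eq_0_iff[OF K, of "\<lambda>u. c u * (v u \<bullet> e)"] nn ce by auto
    hence z: "\<And>u. u \<in> K \<Longrightarrow> c u * (v u \<bullet> e) = 0" by blast
    have "\<forall>u\<in>K. c u = 0"
    proof
      fix u assume u: "u \<in> K"
      have "c u * (v u \<bullet> e) = 0" "v u \<bullet> e > 0" using z[OF u] pos u by auto
      thus "c u = 0" by auto
    qed
    thus False using cnz SK by auto
  qed
  define N where "N = {u\<in>K. c u < 0}"
  have fN: "finite N" "N \<noteq> {}" using K \<open>\<exists>u\<in>K. c u < 0\<close> by (auto simp: N_def)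
  define t where "t = Min ((\<lambda>u. \<alpha> u / (- c u)) ` N)"
  have "t \<in> (\<lambda>u. \<alpha> u / (- c u)) ` N"
    unfolding t_def by (rule Min_in) (use fN in auto)
  then obtain u0 where u0: "u0 \<in> N" "t = \<alpha> u0 / (- c u0)" by blast
  have tle: "\<forall>u\<in>N. t \<le> \<alpha> u / (- c u)" unfolding t_def using fN by auto
  have t0: "t \<ge> 0" using u0 a0 by (auto simp: N_def divide_nonneg_neg)
  define \<alpha>' where "\<alpha>' u = \<alpha> u + t * c u" for u
  have nonneg: "\<forall>u\<in>K. \<alpha>' u \<ge> 0"
  proof
    fix u assume u: "u \<in> K"
    show "\<alpha>' u \<ge> 0"
    proof (cases "c u < 0")
      case True
      hence "t \<le> \<alpha> u / (- c u)" using tle u by (auto simp: N_def)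
      moreover have "- c u > 0" using True by simp
      ultimately have "t * (- c u) \<le> \<alpha> u" using pos_le_divide_eq[of "- c u" t "\<alpha> u"] by blast
      thus ?thesis by (simp add: \<alpha>'_def algebra_simps)
    next
      case False thus ?thesis using t0 a0 u by (simp add: \<alpha>'_def)
    qed
  qed
  have sv: "(\<Sum>u\<in>K. \<alpha>' u *\<^sub>R v u) = (\<Sum>u\<in>K. \<alpha> u *\<^sub>R v u)"
  proof -
    have "(\<Sum>u\<in>K. \<alpha>' u *\<^sub>R v u) = (\<Sum>u\<in>K. \<alpha> u *\<^sub>R v u) + t *\<^sub>R (\<Sum>u\<in>K. c u *\<^sub>R v u)"
      by (simp add: \<alpha>'_def scaleR_add_left sum.distrib scaleR_sum_right)
    thus ?thesis using cv by simp
  qed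
  have sg: "(\<Sum>u\<in>K. \<alpha> u * g u) \<le> (\<Sum>u\<in>K. \<alpha>' u * g u)"
  proof -
    have "(\<Sum>u\<in>K. \<alpha>' u * g u) = (\<Sum>u\<in>K. \<alpha> u * g u) + t * (\<Sum>u\<in>K. c u * g u)"
      by (simp add: \<alpha>'_def algebra_simps sum.distrib sum_distrib_left)
    thus ?thesis using cg t0 by simp
  qed
  have sub: "{u\<in>K. \<alpha>' u \<noteq> 0} \<subseteq> S - {u0}"
  proof -
    have "\<alpha>' u0 = 0" using u0 by (auto simp: \<alpha>'_def N_def)
    moreover have "\<forall>u. u \<notin> S \<longrightarrow> \<alpha>' u = 0 \<or> u \<notin> K" using cout by (auto simp: \<alpha>'_def S_def)
    ultimately show ?thesis by auto
  qed
  have "u0 \<in> S" using u0 cout by (auto simp: N_def)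
  hence "card (S - {u0}) < card S" using fS by (rule card_Diff1_less[rotated])
  hence "card {u\<in>K. \<alpha>' u \<noteq> 0} < card S"
    using card_mono[OF _ sub] fS by (meson finite_Diff le_less_trans)
  thus ?thesis using nonneg sv sg S_def by (intro exI[of _ \<alpha>'] conjI) auto
qed

lemma reduce:
  fixes v :: "nat \<Rightarrow> 'v::euclidean_space"
  assumes K: "finite K" and a0: "\<forall>u\<in>K. \<alpha> u \<ge> 0" and pos: "\<forall>u\<in>K. v u \<bullet> e > 0"
  shows "\<exists>\<beta>. (\<forall>u\<in>K. \<beta> u \<ge> 0) \<and> (\<Sum>u\<in>K. \<beta> u *\<^sub>R v u) = (\<Sum>u\<in>K. \<alpha> u *\<^sub>R v u)
     \<and> (\<Sum>u\<in>K. \<alpha> u * g u) \<le> (\<Sum>u\<in>K. \<beta> u * g u)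
     \<and> card {u\<in>K. \<beta> u \<noteq> 0} \<le> DIM('v)"
  using a0
proof (induction "card {u\<in>K. \<alpha> u \<noteq> 0}" arbitrary: \<alpha> rule: less_induct)
  case less
  show ?case
  proof (cases "card {u\<in>K. \<alpha> u \<noteq> 0} \<le> DIM('v)")
    case True thus ?thesis using less.prems by (intro exI[of _ \<alpha>] conjI) auto
  next
    case False
    hence big: "card {u\<in>K. \<alpha> u \<noteq> 0} > DIM('v)" by simp
    obtain \<alpha>' where a': "\<forall>u\<in>K. \<alpha>' u \<ge> 0" "(\<Sum>u\<in>K. \<alpha>' u *\<^sub>R v u) = (\<Sum>u\<in>K. \<alpha> u *\<^sub>R v u)"
      "(\<Sum>u\<in>K. \<alpha> u * g u) \<le> (\<Sum>u\<in>K. \<alpha>' u * g u)" "card {u\<in>K. \<alpha>' u \<noteq> 0} < card {u\<in>K. \<alpha> u \<noteq> 0}"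
      using reduce_step[OF K less.prems pos big, of g] by blast
    from less.hyps[OF a'(4) a'(1)] obtain \<beta> :: "nat \<Rightarrow> real" where
      "(\<forall>u\<in>K. \<beta> u \<ge> 0) \<and> (\<Sum>u\<in>K. \<beta> u *\<^sub>R v u) = (\<Sum>u\<in>K. \<alpha>' u *\<^sub>R v u)
     \<and> (\<Sum>u\<in>K. \<alpha>' u * g u) \<le> (\<Sum>u\<in>K. \<beta> u * g u) \<and> card {u\<in>K. \<beta> u \<noteq> 0} \<le> DIM('v)" by blast
    thus ?thesis using a' by (intro exI[of _ \<beta>] conjI) auto
  qed
qed


definition colterm :: "'a set \<Rightarrow> nat set \<Rightarrow> ('a \<Rightarrow> nat \<Rightarrow> real) \<Rightarrow> nat \<Rightarrow> real" where
  "colterm A K p u = (\<Sum>a\<in>A. if p a u = 0 then 0 else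
      p a u * log 2 (p a u / ((\<Sum>b'\<in>K. p a b') * (\<Sum>a'\<in>A. p a' u))))"

lemma mutinf_col: "mutinf A K p = (\<Sum>u\<in>K. colterm A K p u)"
  unfolding mutinf_def colterm_def by (rule sum.swap)

lemma mutinf_cong:
  assumes "\<And>a u. a \<in> A \<Longrightarrow> u \<in> K \<Longrightarrow> p a u = q a u"
  shows "mutinf A K p = mutinf A K q"
proof -
  have r: "(\<Sum>b\<in>K. p a b) = (\<Sum>b\<in>K. q a b)" if "a \<in> A" for a
    using assms that by (intro sum.cong) auto
  have c: "(\<Sum>a\<in>A. p a u) = (\<Sum>a\<in>A. q a u)" if "u \<in> K" for u
    using assms that by (intro sum.cong) auto
  show ?thesis unfolding mutinf_def using assms r c by (auto intro!: sum.cong)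
qed

lemma colterm_scale:
  assumes rows: "\<forall>a\<in>A. (\<Sum>j\<in>J. p' a j) = (\<Sum>u\<in>K. p a u)"
    and col: "\<forall>a\<in>A. p' a j = \<beta> * p a u"
  shows "colterm A J p' j = \<beta> * colterm A K p u"
proof -
  have cs: "(\<Sum>a\<in>A. p' a j) = \<beta> * (\<Sum>a\<in>A. p a u)"
    using col by (simp add: sum_distrib_left)
  have "colterm A J p' j = (\<Sum>a\<in>A. \<beta> * (if p a u = 0 then 0 else p a u * log 2 (p a u / ((\<Sum>b'\<in>K. p a b') * (\<Sum>a'\<in>A. p a' u)))))"
    unfolding colterm_def
  proof (rule sum.cong[OF refl])
    fix a assume a: "a \<in> A"
    show "(if p' a j = 0 then 0 else p' a j * log 2 (p' a j / ((\<Sum>b'\<in>J. p' a b') * (\<Sum>a'\<in>A. p' a' j))))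
      = \<beta> * (if p a u = 0 then 0 else p a u * log 2 (p a u / ((\<Sum>b'\<in>K. p a b') * (\<Sum>a'\<in>A. p a' u))))"
    proof (cases "\<beta> = 0 \<or> p a u = 0")
      case True thus ?thesis using col a by auto
    next
      case False
      have e: "\<beta> * p a u / ((\<Sum>b'\<in>K. p a b') * (\<beta> * (\<Sum>a\<in>A. p a u)))
          = p a u / ((\<Sum>b'\<in>K. p a b') * (\<Sum>a'\<in>A. p a' u))"
        using False by (simp add: field_simps)
      have "p' a j = \<beta> * p a u" using col a by simp
      moreover have "(\<Sum>b'\<in>J. p' a b') = (\<Sum>b'\<in>K. p a b')" using rows a by simp
      ultimately show ?thesis using False e cs by simp
    qed
  qed
  thus ?thesis by (simp add: colterm_def sum_distrib_left)
qed

lemma mutinf_scale: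
  fixes J :: "nat set"
  assumes rows: "\<forall>a\<in>A. (\<Sum>j\<in>J. \<beta> j * p a (\<sigma> j)) = (\<Sum>u\<in>K. p a u)"
  shows "mutinf A J (\<lambda>a j. \<beta> j * p a (\<sigma> j)) = (\<Sum>j\<in>J. \<beta> j * colterm A K p (\<sigma> j))"
  unfolding mutinf_col[of A J]
proof (rule sum.cong[OF refl])
  fix j assume "j \<in> J"
  show "colterm A J (\<lambda>a j. \<beta> j * p a (\<sigma> j)) j = \<beta> j * colterm A K p (\<sigma> j)"
    by (rule colterm_scale) (use rows in auto)
qed

lemma colterm_zero:
  assumes "\<forall>a\<in>A. p a u = 0"
  shows "colterm A K p u = 0"
  using assms unfolding colterm_def by simp

definition jZ :: "('x::finite \<Rightarrow> real) \<Rightarrow> ('x \<Rightarrow> 'y::finite \<Rightarrow> real) \<Rightarrow> ('x \<Rightarrow> 'z \<Rightarrow> real)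
    \<Rightarrow> ('y \<Rightarrow> nat \<Rightarrow> real) \<Rightarrow> 'z \<Rightarrow> nat \<Rightarrow> real" where
  "jZ PX PY PZ W = (\<lambda>z u. \<Sum>x\<in>UNIV. \<Sum>y\<in>UNIV. PX x * PZ x z * PY x y * W y u)"
definition jY :: "('x::finite \<Rightarrow> real) \<Rightarrow> ('x \<Rightarrow> 'y::finite \<Rightarrow> real)
    \<Rightarrow> ('y \<Rightarrow> nat \<Rightarrow> real) \<Rightarrow> 'y \<Rightarrow> nat \<Rightarrow> real" where
  "jY PX PY W = (\<lambda>y u. \<Sum>x\<in>UNIV. PX x * PY x y * W y u)"
definition jX :: "('x::finite \<Rightarrow> real) \<Rightarrow> ('x \<Rightarrow> 'y::finite \<Rightarrow> real)
    \<Rightarrow> ('y \<Rightarrow> nat \<Rightarrow> real) \<Rightarrow> 'x \<Rightarrow> nat \<Rightarrow> real" where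
  "jX PX PY W = (\<lambda>x u. \<Sum>y\<in>UNIV. PX x * PY x y * W y u)"

lemma rows_jZ: "(\<Sum>j\<in>J. jZ PX PY PZ W z j) = (\<Sum>x\<in>UNIV. \<Sum>y\<in>UNIV. PX x * PZ x z * PY x y * (\<Sum>j\<in>J. W y j))"
proof -
  have "(\<Sum>j\<in>J. jZ PX PY PZ W z j) = (\<Sum>j\<in>J. \<Sum>x\<in>UNIV. \<Sum>y\<in>UNIV. PX x * PZ x z * PY x y * W y j)"
    by (simp add: jZ_def)
  also have "\<dots> = (\<Sum>x\<in>UNIV. \<Sum>j\<in>J. \<Sum>y\<in>UNIV. PX x * PZ x z * PY x y * W y j)" by (rule sum.swap)
  also have "\<dots> = (\<Sum>x\<in>UNIV. \<Sum>y\<in>UNIV. \<Sum>j\<in>J. PX x * PZ x z * PY x y * W y j)"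
    by (rule sum.cong[OF refl], rule sum.swap)
  finally show ?thesis by (simp add: sum_distrib_left)
qed
lemma rows_jY: "(\<Sum>j\<in>J. jY PX PY W y j) = (\<Sum>x\<in>UNIV. PX x * PY x y * (\<Sum>j\<in>J. W y j))"
proof -
  have "(\<Sum>j\<in>J. jY PX PY W y j) = (\<Sum>j\<in>J. \<Sum>x\<in>UNIV. PX x * PY x y * W y j)"
    by (simp add: jY_def)
  also have "\<dots> = (\<Sum>x\<in>UNIV. \<Sum>j\<in>J. PX x * PY x y * W y j)" by (rule sum.swap)
  finally show ?thesis by (simp add: sum_distrib_left)
qed
lemma rows_jX: "(\<Sum>j\<in>J. jX PX PY W x j) = (\<Sum>y\<in>UNIV. PX x * PY x y * (\<Sum>j\<in>J. W y j))"
proof -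
  have "(\<Sum>j\<in>J. jX PX PY W x j) = (\<Sum>j\<in>J. \<Sum>y\<in>UNIV. PX x * PY x y * W y j)"
    by (simp add: jX_def)
  also have "\<dots> = (\<Sum>y\<in>UNIV. \<Sum>j\<in>J. PX x * PY x y * W y j)" by (rule sum.swap)
  finally show ?thesis by (simp add: sum_distrib_left)
qed

lemma scale_jZ: "jZ PX PY PZ (\<lambda>y j. \<beta> j * W y (\<sigma> j)) z j = \<beta> j * jZ PX PY PZ W z (\<sigma> j)"
  unfolding jZ_def by (simp add: sum_distrib_left mult.assoc mult.left_commute)
lemma scale_jY: "jY PX PY (\<lambda>y j. \<beta> j * W y (\<sigma> j)) z j = \<beta> j * jY PX PY W z (\<sigma> j)"
  unfolding jY_def by (simp add: sum_distrib_left mult.assoc mult.left_commute)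
lemma scale_jX: "jX PX PY (\<lambda>y j. \<beta> j * W y (\<sigma> j)) z j = \<beta> j * jX PX PY W z (\<sigma> j)"
  unfolding jX_def by (simp add: sum_distrib_left mult.assoc mult.left_commute)

lemma zero_jZ: "(\<forall>y. W y u = 0) \<Longrightarrow> jZ PX PY PZ W z u = 0" unfolding jZ_def by simp
lemma zero_jY: "(\<forall>y. W y u = 0) \<Longrightarrow> jY PX PY W z u = 0" unfolding jY_def by simp
lemma zero_jX: "(\<forall>y. W y u = 0) \<Longrightarrow> jX PX PY W z u = 0" unfolding jX_def by simp


lemma transfer:
  fixes J :: "nat set"
  assumes bij: "bij_betw \<sigma> J S0" and sub: "S0 \<subseteq> K0" and fK0: "finite K0"
    and b0: "\<forall>u\<in>K0 - S0. \<beta> u = 0"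
    and rows: "\<forall>a\<in>A. (\<Sum>j\<in>J. \<beta> (\<sigma> j) * p a (\<sigma> j)) = (\<Sum>u\<in>K. p a u)"
  shows "mutinf A J (\<lambda>a j. \<beta> (\<sigma> j) * p a (\<sigma> j)) = (\<Sum>u\<in>K0. \<beta> u * colterm A K p u)"
proof -
  have "mutinf A J (\<lambda>a j. \<beta> (\<sigma> j) * p a (\<sigma> j)) = (\<Sum>j\<in>J. \<beta> (\<sigma> j) * colterm A K p (\<sigma> j))"
    by (rule mutinf_scale[where \<beta>="\<lambda>j. \<beta> (\<sigma> j)"]) (use rows in auto)
  also have "\<dots> = (\<Sum>u\<in>S0. \<beta> u * colterm A K p u)"
    by (rule sum.reindex_bij_betw[OF bij])
  also have "\<dots> = (\<Sum>u\<in>K0. \<beta> u * colterm A K p u)"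
    by (rule sum.mono_neutral_left) (use fK0 sub b0 in auto)
  finally show ?thesis .
qed

lemma mutinf_restrict:
  assumes "K0 \<subseteq> K" "finite K" "\<forall>u\<in>K - K0. \<forall>a\<in>A. p a u = 0"
  shows "mutinf A K p = (\<Sum>u\<in>K0. colterm A K p u)"
  unfolding mutinf_col
  by (rule sum.mono_neutral_right) (use assms in \<open>auto intro!: colterm_zero\<close>)

lemma A1_alt: "A1 PX PY PZ = {(RI, RS, RJ, RL). \<exists>k::nat. \<exists>Q :: 'y::finite \<Rightarrow> nat \<Rightarrow> real.
     k \<le> card (UNIV :: 'y set) + 2 \<and> is_channel UNIV {..<k} Q \<and>
     RI + RS \<le> mutinf UNIV {..<k} (jZ PX PY PZ Q) \<and>
     RJ \<ge> mutinf UNIV {..<k} (jY PX PY Q) - mutinf UNIV {..<k} (jZ PX PY PZ Q) + RI \<and>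
     RL \<ge> mutinf UNIV {..<k} (jX PX PY Q) - mutinf UNIV {..<k} (jZ PX PY PZ Q) + RI \<and> RI \<ge> 0 \<and> RS \<ge> 0}"
  for PX :: "'x::finite \<Rightarrow> real" and PZ :: "'x \<Rightarrow> 'z::finite \<Rightarrow> real"
  unfolding A1_def jZ_def jY_def jX_def Let_def by simp

lemma A2_alt: "A2 PX PY PZ = {(RI, RS, RJ, RL). \<exists>k m::nat. \<exists>Q :: 'y::finite \<Rightarrow> nat \<Rightarrow> real. \<exists>S :: nat \<Rightarrow> nat \<Rightarrow> real.
     k \<le> (card (UNIV :: 'y set) + 2) * (card (UNIV :: 'y set) + 3) \<and> m \<le> card (UNIV :: 'y set) + 3 \<and>
     is_channel UNIV {..<k} Q \<and> is_channel {..<k} {..<m} S \<and>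
     (let IZU = mutinf UNIV {..<k} (jZ PX PY PZ Q);
          IZV = mutinf UNIV {..<m} (\<lambda>z v. \<Sum>x\<in>UNIV. \<Sum>y\<in>UNIV. \<Sum>u<k. PX x * PZ x z * PY x y * Q y u * S u v);
          IYU = mutinf UNIV {..<k} (jY PX PY Q);
          IXU = mutinf UNIV {..<k} (jX PX PY Q)
      in 0 \<le> RI \<and> RI \<le> IZV \<and> 0 \<le> RS \<and> RS \<le> IZU - IZV \<and>
         RJ \<ge> IYU - IZU + IZV \<and> RL \<ge> IXU - IZU + IZV)}"
  for PX :: "'x::finite \<Rightarrow> real" and PZ :: "'x \<Rightarrow> 'z::finite \<Rightarrow> real"
  unfolding A2_def jZ_def jY_def jX_def by simp

lemma card_reduce:
  fixes PX :: "'x::finite \<Rightarrow> real" and PY :: "'x \<Rightarrow> 'y::finite \<Rightarrow> real"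
    and PZ :: "'x \<Rightarrow> 'z::finite \<Rightarrow> real" and Q :: "'y \<Rightarrow> nat \<Rightarrow> real"
  assumes Q: "is_channel UNIV {..<k} Q"
  shows "\<exists>n Q'. n \<le> CARD('y) + 2 \<and> is_channel UNIV {..<n} Q' \<and>
     mutinf UNIV {..<k} (jZ PX PY PZ Q) \<le> mutinf UNIV {..<n} (jZ PX PY PZ Q') \<and>
     mutinf UNIV {..<n} (jZ PX PY PZ Q') - mutinf UNIV {..<n} (jY PX PY Q') =
       mutinf UNIV {..<k} (jZ PX PY PZ Q) - mutinf UNIV {..<k} (jY PX PY Q) \<and>
     mutinf UNIV {..<n} (jZ PX PY PZ Q') - mutinf UNIV {..<n} (jX PX PY Q') =
       mutinf UNIV {..<k} (jZ PX PY PZ Q) - mutinf UNIV {..<k} (jX PX PY Q)"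
proof -
  have Qnn: "\<And>y u. u < k \<Longrightarrow> Q y u \<ge> 0" and Qs: "\<And>y. (\<Sum>u<k. Q y u) = 1"
    using Q unfolding is_channel_def is_pmf_def by auto
  define K0 where "K0 = {u\<in>{..<k}. 0 < (\<Sum>y\<in>UNIV. Q y u)}"
  have K0sub: "K0 \<subseteq> {..<k}" and fK0: "finite K0" by (auto simp: K0_def)
  have zerocol: "\<forall>y. Q y u = 0" if "u \<in> {..<k} - K0" for u
  proof -
    have "(\<Sum>y\<in>UNIV. Q y u) \<le> 0" "\<forall>y\<in>UNIV. Q y u \<ge> 0" using that Qnn by (auto simp: K0_def)
    moreover have "(\<Sum>y\<in>UNIV. Q y u) \<ge> 0" using Qnn that by (auto intro: sum_nonneg)
    ultimately show ?thesis using sum_nonneg_eq_0_iff[of UNIV "\<lambda>y. Q y u"] by auto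
  qed
  define TZ where "TZ u = colterm UNIV {..<k} (jZ PX PY PZ Q) u" for u
  define TY where "TY u = colterm UNIV {..<k} (jY PX PY Q) u" for u
  define TX where "TX u = colterm UNIV {..<k} (jX PX PY Q) u" for u
  have IZ: "mutinf UNIV {..<k} (jZ PX PY PZ Q) = (\<Sum>u\<in>K0. TZ u)"
    unfolding TZ_def by (rule mutinf_restrict) (use K0sub zerocol in \<open>auto intro: zero_jZ\<close>)
  have IY: "mutinf UNIV {..<k} (jY PX PY Q) = (\<Sum>u\<in>K0. TY u)"
    unfolding TY_def by (rule mutinf_restrict) (use K0sub zerocol in \<open>auto intro: zero_jY\<close>)
  have IX: "mutinf UNIV {..<k} (jX PX PY Q) = (\<Sum>u\<in>K0. TX u)"
    unfolding TX_def by (rule mutinf_restrict) (use K0sub zerocol in \<open>auto intro: zero_jX\<close>)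
  define v where "v u = ((\<chi> y. Q y u) :: real^'y, TZ u - TY u, TZ u - TX u)" for u
  define e where "e = ((\<chi> y. 1) :: real^'y, 0::real, 0::real)"
  have ve: "\<forall>u\<in>K0. v u \<bullet> e > 0" by (auto simp: v_def e_def inner_vec_def K0_def)
  obtain \<beta> where b: "\<forall>u\<in>K0. \<beta> u \<ge> 0" "(\<Sum>u\<in>K0. \<beta> u *\<^sub>R v u) = (\<Sum>u\<in>K0. 1 *\<^sub>R v u)"
     "(\<Sum>u\<in>K0. 1 * TZ u) \<le> (\<Sum>u\<in>K0. \<beta> u * TZ u)" "card {u\<in>K0. \<beta> u \<noteq> 0} \<le> DIM((real^'y) \<times> real \<times> real)"
    using reduce[OF fK0 _ ve, of "\<lambda>_. 1" TZ] by auto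
  have c1: "(\<Sum>u\<in>K0. \<beta> u * Q y u) = 1" for y
  proof -
    have "(\<Sum>u\<in>K0. \<beta> u * Q y u) = (\<Sum>u\<in>K0. Q y u)"
      using arg_cong[OF b(2), of "\<lambda>w. fst w $ y"] by (simp add: fst_sum v_def)
    also have "\<dots> = (\<Sum>u<k. Q y u)"
      by (rule sum.mono_neutral_left) (use K0sub zerocol in auto)
    finally show ?thesis using Qs by simp
  qed
  have c2: "(\<Sum>u\<in>K0. \<beta> u * (TZ u - TY u)) = (\<Sum>u\<in>K0. TZ u - TY u)"
    using arg_cong[OF b(2), of "\<lambda>w. fst (snd w)"] by (simp add: fst_sum snd_sum v_def)
  have c3: "(\<Sum>u\<in>K0. \<beta> u * (TZ u - TX u)) = (\<Sum>u\<in>K0. TZ u - TX u)"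
    using arg_cong[OF b(2), of "\<lambda>w. snd (snd w)"] by (simp add: fst_sum snd_sum v_def)
  define S0 where "S0 = {u\<in>K0. \<beta> u \<noteq> 0}"
  define n where "n = card S0"
  have fS0: "finite S0" using fK0 by (simp add: S0_def)
  obtain \<sigma> where \<sigma>: "bij_betw \<sigma> {..<n} S0"
    using ex_bij_betw_nat_finite[OF fS0] by (auto simp: n_def atLeast0LessThan)
  have S0K0: "S0 \<subseteq> K0" by (auto simp: S0_def)
  have b0: "\<forall>u\<in>K0 - S0. \<beta> u = 0" by (auto simp: S0_def)
  define Q' where "Q' y j = \<beta> (\<sigma> j) * Q y (\<sigma> j)" for y j
  have sumQ': "(\<Sum>j<n. \<beta> (\<sigma> j) * W (\<sigma> j)) = (\<Sum>u\<in>K0. \<beta> u * W u)" for W :: "nat \<Rightarrow> real"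
  proof -
    have "(\<Sum>j<n. \<beta> (\<sigma> j) * W (\<sigma> j)) = (\<Sum>u\<in>S0. \<beta> u * W u)"
      by (rule sum.reindex_bij_betw[OF \<sigma>])
    also have "\<dots> = (\<Sum>u\<in>K0. \<beta> u * W u)"
      by (rule sum.mono_neutral_left) (use fK0 S0K0 b0 in auto)
    finally show ?thesis .
  qed
  have rowQ': "(\<Sum>j<n. Q' y j) = 1" for y using sumQ'[of "Q y"] c1 by (simp add: Q'_def)
  have chan: "is_channel UNIV {..<n} Q'"
    unfolding is_channel_def is_pmf_def
  proof (intro ballI conjI)
    fix y j assume j: "j \<in> {..<n}"
    hence "\<sigma> j \<in> S0" using \<sigma> by (auto simp: bij_betw_def)
    hence "\<sigma> j \<in> K0" "\<sigma> j < k" using S0K0 K0sub by auto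
    thus "Q' y j \<ge> 0" using b(1) Qnn by (simp add: Q'_def)
  next
    fix y show "sum (Q' y) {..<n} = 1" using rowQ' by simp
  qed
  have Q'eq: "Q' = (\<lambda>y j. \<beta> (\<sigma> j) * Q y (\<sigma> j))" by (simp add: Q'_def fun_eq_iff)
  have JZ: "mutinf UNIV {..<n} (jZ PX PY PZ Q') = (\<Sum>u\<in>K0. \<beta> u * TZ u)"
  proof -
    have "jZ PX PY PZ Q' = (\<lambda>z j. \<beta> (\<sigma> j) * jZ PX PY PZ Q z (\<sigma> j))"
      unfolding Q'eq by (rule ext, rule ext, rule scale_jZ)
    moreover have "\<forall>z\<in>UNIV. (\<Sum>j<n. \<beta> (\<sigma> j) * jZ PX PY PZ Q z (\<sigma> j)) = (\<Sum>u<k. jZ PX PY PZ Q z u)"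
    proof
      fix z
      have "(\<Sum>j<n. \<beta> (\<sigma> j) * jZ PX PY PZ Q z (\<sigma> j)) = (\<Sum>j<n. jZ PX PY PZ Q' z j)"
        unfolding Q'eq by (rule sum.cong[OF refl], rule scale_jZ[symmetric])
      thus "(\<Sum>j<n. \<beta> (\<sigma> j) * jZ PX PY PZ Q z (\<sigma> j)) = (\<Sum>u<k. jZ PX PY PZ Q z u)"
        unfolding rows_jZ using rowQ' Qs by simp
    qed
    ultimately show ?thesis unfolding TZ_def
      using transfer[OF \<sigma> S0K0 fK0 b0, of UNIV "jZ PX PY PZ Q" "{..<k}"] by simp
  qed
  have JY: "mutinf UNIV {..<n} (jY PX PY Q') = (\<Sum>u\<in>K0. \<beta> u * TY u)"
  proof -
    have "jY PX PY Q' = (\<lambda>z j. \<beta> (\<sigma> j) * jY PX PY Q z (\<sigma> j))"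
      unfolding Q'eq by (rule ext, rule ext, rule scale_jY)
    moreover have "\<forall>z\<in>UNIV. (\<Sum>j<n. \<beta> (\<sigma> j) * jY PX PY Q z (\<sigma> j)) = (\<Sum>u<k. jY PX PY Q z u)"
    proof
      fix z
      have "(\<Sum>j<n. \<beta> (\<sigma> j) * jY PX PY Q z (\<sigma> j)) = (\<Sum>j<n. jY PX PY Q' z j)"
        unfolding Q'eq by (rule sum.cong[OF refl], rule scale_jY[symmetric])
      thus "(\<Sum>j<n. \<beta> (\<sigma> j) * jY PX PY Q z (\<sigma> j)) = (\<Sum>u<k. jY PX PY Q z u)"
        unfolding rows_jY using rowQ' Qs by simp
    qed
    ultimately show ?thesis unfolding TY_def
      using transfer[OF \<sigma> S0K0 fK0 b0, of UNIV "jY PX PY Q" "{..<k}"] by simp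
  qed
  have JX: "mutinf UNIV {..<n} (jX PX PY Q') = (\<Sum>u\<in>K0. \<beta> u * TX u)"
  proof -
    have "jX PX PY Q' = (\<lambda>z j. \<beta> (\<sigma> j) * jX PX PY Q z (\<sigma> j))"
      unfolding Q'eq by (rule ext, rule ext, rule scale_jX)
    moreover have "\<forall>z\<in>UNIV. (\<Sum>j<n. \<beta> (\<sigma> j) * jX PX PY Q z (\<sigma> j)) = (\<Sum>u<k. jX PX PY Q z u)"
    proof
      fix z
      have "(\<Sum>j<n. \<beta> (\<sigma> j) * jX PX PY Q z (\<sigma> j)) = (\<Sum>j<n. jX PX PY Q' z j)"
        unfolding Q'eq by (rule sum.cong[OF refl], rule scale_jX[symmetric])
      thus "(\<Sum>j<n. \<beta> (\<sigma> j) * jX PX PY Q z (\<sigma> j)) = (\<Sum>u<k. jX PX PY Q z u)"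
        unfolding rows_jX using rowQ' Qs by simp
    qed
    ultimately show ?thesis unfolding TX_def
      using transfer[OF \<sigma> S0K0 fK0 b0, of UNIV "jX PX PY Q" "{..<k}"] by simp
  qed
  have ncard: "n \<le> CARD('y) + 2" using b(4) by (simp add: n_def S0_def)
  show ?thesis
  proof (intro exI conjI)
    show "n \<le> CARD('y) + 2" by (rule ncard)
    show "is_channel UNIV {..<n} Q'" by (rule chan)
    show "mutinf UNIV {..<k} (jZ PX PY PZ Q) \<le> mutinf UNIV {..<n} (jZ PX PY PZ Q')"
      using b(3) IZ JZ by simp
    show "mutinf UNIV {..<n} (jZ PX PY PZ Q') - mutinf UNIV {..<n} (jY PX PY Q') =
       mutinf UNIV {..<k} (jZ PX PY PZ Q) - mutinf UNIV {..<k} (jY PX PY Q)"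
      using c2 unfolding JZ JY IZ IY by (simp add: sum_subtractf right_diff_distrib)
    show "mutinf UNIV {..<n} (jZ PX PY PZ Q') - mutinf UNIV {..<n} (jX PX PY Q') =
       mutinf UNIV {..<k} (jZ PX PY PZ Q) - mutinf UNIV {..<k} (jX PX PY Q)"
      using c3 unfolding JZ JX IZ IX by (simp add: sum_subtractf right_diff_distrib)
  qed
qed


lemma total_pZ:
  fixes PX :: "'x::finite \<Rightarrow> real" and PY :: "'x \<Rightarrow> 'y::finite \<Rightarrow> real"
    and PZ :: "'x \<Rightarrow> 'z::finite \<Rightarrow> real"
  assumes PX: "is_pmf UNIV PX" and PY: "is_channel UNIV UNIV PY" and PZ: "is_channel UNIV UNIV PZ"
  shows "(\<Sum>z\<in>UNIV. \<Sum>x\<in>UNIV. \<Sum>y\<in>UNIV. PX x * PZ x z * PY x y) = 1"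
proof -
  have sy: "(\<Sum>y\<in>UNIV. PY x y) = 1" and sz: "(\<Sum>z\<in>UNIV. PZ x z) = 1" for x
    using PY PZ unfolding is_channel_def is_pmf_def by auto
  have "(\<Sum>z\<in>UNIV. \<Sum>x\<in>UNIV. \<Sum>y\<in>UNIV. PX x * PZ x z * PY x y)
      = (\<Sum>x\<in>UNIV. \<Sum>z\<in>UNIV. \<Sum>y\<in>UNIV. PX x * PZ x z * PY x y)" by (rule sum.swap)
  also have "\<dots> = (\<Sum>x\<in>UNIV. \<Sum>z\<in>UNIV. PX x * PZ x z * (\<Sum>y\<in>UNIV. PY x y))"
    by (simp add: sum_distrib_left)
  also have "\<dots> = (\<Sum>x\<in>UNIV. PX x * (\<Sum>z\<in>UNIV. PZ x z))"
    by (simp add: sy sum_distrib_left)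
  also have "\<dots> = 1" using PX by (simp add: sz is_pmf_def)
  finally show ?thesis .
qed

lemma erasure:
  fixes PX :: "'x::finite \<Rightarrow> real" and PY :: "'x \<Rightarrow> 'y::finite \<Rightarrow> real"
    and PZ :: "'x \<Rightarrow> 'z::finite \<Rightarrow> real" and Q :: "'y \<Rightarrow> nat \<Rightarrow> real"
  assumes PX: "is_pmf UNIV PX" and PY: "is_channel UNIV UNIV PY" and PZ: "is_channel UNIV UNIV PZ"
    and Q: "is_channel UNIV {..<k} Q" and l0: "0 \<le> l" and l1: "l \<le> 1"
  defines "S \<equiv> (\<lambda>u v. if v = k then 1 - l else if v = u then l else (0::real))"
  shows "is_channel {..<k} {..<Suc k} S \<and>
    mutinf UNIV {..<Suc k} (\<lambda>z v. \<Sum>x\<in>UNIV. \<Sum>y\<in>UNIV. \<Sum>u<k. PX x * PZ x z * PY x y * Q y u * S u v)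
      = l * mutinf UNIV {..<k} (jZ PX PY PZ Q)"
proof
  show "is_channel {..<k} {..<Suc k} S"
    unfolding is_channel_def is_pmf_def
  proof (intro ballI conjI)
    fix u v show "0 \<le> S u v" using l0 l1 by (simp add: S_def)
  next
    fix u assume u: "u \<in> {..<k}"
    have "sum (S u) {..<Suc k} = S u k + (\<Sum>v<k. S u v)" by simp
    also have "(\<Sum>v<k. S u v) = (\<Sum>v<k. if v = u then l else 0)"
      by (rule sum.cong) (auto simp: S_def)
    also have "\<dots> = l" using u by simp
    finally show "sum (S u) {..<Suc k} = 1" by (simp add: S_def)
  qed
next
  have Qs: "\<And>y. (\<Sum>u<k. Q y u) = 1"
    using Q unfolding is_channel_def is_pmf_def by auto
  define pZ where "pZ z = (\<Sum>u<k. jZ PX PY PZ Q z u)" for z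
  have pZ': "pZ z = (\<Sum>x\<in>UNIV. \<Sum>y\<in>UNIV. PX x * PZ x z * PY x y)" for z
    unfolding pZ_def rows_jZ Qs by simp
  have tot: "(\<Sum>z\<in>UNIV. pZ z) = 1" unfolding pZ' by (rule total_pZ[OF PX PY PZ])
  define q where "q z v = (if v < k then l * jZ PX PY PZ Q z v else (1 - l) * pZ z)" for z v
  have eq: "(\<Sum>x\<in>UNIV. \<Sum>y\<in>UNIV. \<Sum>u<k. PX x * PZ x z * PY x y * Q y u * S u v) = q z v"
    if v: "v \<in> {..<Suc k}" for z v
  proof (cases "v < k")
    case True
    have "(\<Sum>u<k. PX x * PZ x z * PY x y * Q y u * S u v) = PX x * PZ x z * PY x y * Q y v * l" for x y
    proof -
      have "(\<Sum>u<k. PX x * PZ x z * PY x y * Q y u * S u v)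
          = (\<Sum>u<k. if u = v then PX x * PZ x z * PY x y * Q y u * l else 0)"
        by (rule sum.cong) (use True in \<open>auto simp: S_def\<close>)
      thus ?thesis using True by simp
    qed
    hence "(\<Sum>x\<in>UNIV. \<Sum>y\<in>UNIV. \<Sum>u<k. PX x * PZ x z * PY x y * Q y u * S u v)
        = (\<Sum>x\<in>UNIV. \<Sum>y\<in>UNIV. PX x * PZ x z * PY x y * Q y v * l)" by simp
    also have "\<dots> = l * jZ PX PY PZ Q z v"
      by (simp add: jZ_def sum_distrib_left sum_distrib_right mult.commute)
    finally show ?thesis using True by (simp add: q_def)
  next
    case False
    hence vk: "v = k" using v by auto
    have "(\<Sum>x\<in>UNIV. \<Sum>y\<in>UNIV. \<Sum>u<k. PX x * PZ x z * PY x y * Q y u * S u v)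
        = (\<Sum>x\<in>UNIV. \<Sum>y\<in>UNIV. (1 - l) * (PX x * PZ x z * PY x y * (\<Sum>u<k. Q y u)))"
      by (simp add: vk S_def sum_distrib_left sum_distrib_right mult.commute mult.left_commute)
    also have "\<dots> = (1 - l) * pZ z" by (simp add: Qs pZ' sum_distrib_left)
    finally show ?thesis using vk by (simp add: q_def)
  qed
  have "mutinf UNIV {..<Suc k} (\<lambda>z v. \<Sum>x\<in>UNIV. \<Sum>y\<in>UNIV. \<Sum>u<k. PX x * PZ x z * PY x y * Q y u * S u v)
      = mutinf UNIV {..<Suc k} q"
    by (rule mutinf_cong) (use eq in auto)
  also have "\<dots> = (\<Sum>v<k. colterm UNIV {..<Suc k} q v) + colterm UNIV {..<Suc k} q k"
    unfolding mutinf_col by simp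
  also have "(\<Sum>v<k. colterm UNIV {..<Suc k} q v) = (\<Sum>v<k. l * colterm UNIV {..<k} (jZ PX PY PZ Q) v)"
  proof (rule sum.cong[OF refl])
    fix v assume v: "v \<in> {..<k}"
    have rows: "(\<Sum>j<Suc k. q z j) = (\<Sum>u<k. jZ PX PY PZ Q z u)" for z
    proof -
      have "(\<Sum>j<Suc k. q z j) = (\<Sum>j<k. l * jZ PX PY PZ Q z j) + (1 - l) * pZ z"
        by (simp add: q_def)
      also have "\<dots> = pZ z" by (simp add: sum_distrib_left[symmetric] pZ_def algebra_simps)
      finally show ?thesis by (simp add: pZ_def)
    qed
    show "colterm UNIV {..<Suc k} q v = l * colterm UNIV {..<k} (jZ PX PY PZ Q) v"
      by (rule colterm_scale) (use rows v in \<open>auto simp: q_def\<close>)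
  qed
  also have "colterm UNIV {..<Suc k} q k = 0"
  proof -
    have rows: "(\<Sum>j<Suc k. q z j) = pZ z" for z
    proof -
      have "(\<Sum>j<Suc k. q z j) = (\<Sum>j<k. l * jZ PX PY PZ Q z j) + (1 - l) * pZ z"
        by (simp add: q_def)
      also have "\<dots> = pZ z" by (simp add: sum_distrib_left[symmetric] pZ_def algebra_simps)
      finally show ?thesis .
    qed
    have cols: "(\<Sum>z\<in>UNIV. q z k) = 1 - l"
      using tot by (simp add: q_def sum_distrib_left[symmetric])
    show ?thesis unfolding colterm_def rows cols
      by (rule sum.neutral) (auto simp: q_def)
  qed
  finally show "mutinf UNIV {..<Suc k} (\<lambda>z v. \<Sum>x\<in>UNIV. \<Sum>y\<in>UNIV. \<Sum>u<k. PX x * PZ x z * PY x y * Q y u * S u v)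
      = l * mutinf UNIV {..<k} (jZ PX PY PZ Q)"
    by (simp add: mutinf_col sum_distrib_left)
qed

theorem mainTheorem2:
  fixes PX :: "'x::finite \<Rightarrow> real" and PY :: "'x \<Rightarrow> 'y::finite \<Rightarrow> real"
    and PZ :: "'x \<Rightarrow> 'z::finite \<Rightarrow> real"
  assumes "is_pmf UNIV PX" and "is_channel UNIV UNIV PY" and "is_channel UNIV UNIV PZ"
  shows "A1 PX PY PZ = A2 PX PY PZ"
proof
  show "A1 PX PY PZ \<subseteq> A2 PX PY PZ"
  proof
    fix t assume "t \<in> A1 PX PY PZ"
    then obtain RI RS RJ RL k Q where t: "t = (RI, RS, RJ, RL)" and
      k: "k \<le> CARD('y) + 2" and Q: "is_channel UNIV {..<k} Q" and
      h1: "RI + RS \<le> mutinf UNIV {..<k} (jZ PX PY PZ Q)" and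
      h2: "RJ \<ge> mutinf UNIV {..<k} (jY PX PY Q) - mutinf UNIV {..<k} (jZ PX PY PZ Q) + RI" and
      h3: "RL \<ge> mutinf UNIV {..<k} (jX PX PY Q) - mutinf UNIV {..<k} (jZ PX PY PZ Q) + RI" and
      h4: "RI \<ge> 0" "RS \<ge> 0"
      unfolding A1_alt by auto
    define IZU where "IZU = mutinf UNIV {..<k} (jZ PX PY PZ Q)"
    define l where "l = (if IZU = 0 then 0 else RI / IZU)"
    have IZU0: "IZU \<ge> 0" using h1 h4 by (simp add: IZU_def)
    have l0: "0 \<le> l" using IZU0 h4 by (simp add: l_def)
    have l1: "l \<le> 1" using IZU0 h4 h1 by (simp add: l_def IZU_def divide_le_eq_1)
    have lI: "l * IZU = RI" using IZU0 h4 h1 by (auto simp: l_def IZU_def)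
    define S where "S = (\<lambda>u v. if v = k then 1 - l else if v = u then l else (0::real))"
    have E: "is_channel {..<k} {..<Suc k} S \<and>
      mutinf UNIV {..<Suc k} (\<lambda>z v. \<Sum>x\<in>UNIV. \<Sum>y\<in>UNIV. \<Sum>u<k. PX x * PZ x z * PY x y * Q y u * S u v)
      = l * mutinf UNIV {..<k} (jZ PX PY PZ Q)"
      unfolding S_def by (rule erasure[OF assms Q l0 l1])
    have kk: "k \<le> (CARD('y) + 2) * (CARD('y) + 3)"
    proof -
      have "(CARD('y) + 2) * 1 \<le> (CARD('y) + 2) * (CARD('y) + 3)" by (rule mult_le_mono2) simp
      thus ?thesis using k by simp
    qed
    show "t \<in> A2 PX PY PZ"
      unfolding A2_alt t Let_def
      apply (simp only: mem_Collect_eq case_prod_conv)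
      apply (rule exI[of _ k], rule exI[of _ "Suc k"], rule exI[of _ Q], rule exI[of _ S])
      using E kk k Q h1 h2 h3 h4 lI by (simp add: IZU_def)
  qed
next
  show "A2 PX PY PZ \<subseteq> A1 PX PY PZ"
  proof
    fix t assume tA: "t \<in> A2 PX PY PZ"
    obtain RI RS RJ RL where t: "t = (RI, RS, RJ, RL)" by (cases t) auto
    from tA obtain k m :: nat and Q :: "'y \<Rightarrow> nat \<Rightarrow> real" and S :: "nat \<Rightarrow> nat \<Rightarrow> real" where
      Q: "is_channel UNIV {..<k} Q" and
      h: "0 \<le> RI" "RI \<le> mutinf UNIV {..<m} (\<lambda>z v. \<Sum>x\<in>UNIV. \<Sum>y\<in>UNIV. \<Sum>u<k. PX x * PZ x z * PY x y * Q y u * S u v)"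
        "0 \<le> RS" "RS \<le> mutinf UNIV {..<k} (jZ PX PY PZ Q) - mutinf UNIV {..<m} (\<lambda>z v. \<Sum>x\<in>UNIV. \<Sum>y\<in>UNIV. \<Sum>u<k. PX x * PZ x z * PY x y * Q y u * S u v)"
        "RJ \<ge> mutinf UNIV {..<k} (jY PX PY Q) - mutinf UNIV {..<k} (jZ PX PY PZ Q) + mutinf UNIV {..<m} (\<lambda>z v. \<Sum>x\<in>UNIV. \<Sum>y\<in>UNIV. \<Sum>u<k. PX x * PZ x z * PY x y * Q y u * S u v)"
        "RL \<ge> mutinf UNIV {..<k} (jX PX PY Q) - mutinf UNIV {..<k} (jZ PX PY PZ Q) + mutinf UNIV {..<m} (\<lambda>z v. \<Sum>x\<in>UNIV. \<Sum>y\<in>UNIV. \<Sum>u<k. PX x * PZ x z * PY x y * Q y u * S u v)"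
      unfolding A2_alt Let_def t mem_Collect_eq case_prod_conv by blast
    obtain n Q' where n: "n \<le> CARD('y) + 2" "is_channel UNIV {..<n} Q'"
      "mutinf UNIV {..<k} (jZ PX PY PZ Q) \<le> mutinf UNIV {..<n} (jZ PX PY PZ Q')"
      "mutinf UNIV {..<n} (jZ PX PY PZ Q') - mutinf UNIV {..<n} (jY PX PY Q') =
         mutinf UNIV {..<k} (jZ PX PY PZ Q) - mutinf UNIV {..<k} (jY PX PY Q)"
      "mutinf UNIV {..<n} (jZ PX PY PZ Q') - mutinf UNIV {..<n} (jX PX PY Q') =
         mutinf UNIV {..<k} (jZ PX PY PZ Q) - mutinf UNIV {..<k} (jX PX PY Q)"
      using card_reduce[OF Q, where PX=PX and PY=PY and PZ=PZ] by blast
    show "t \<in> A1 PX PY PZ"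
      unfolding A1_alt t
      apply (simp only: mem_Collect_eq case_prod_conv)
      apply (rule exI[of _ n], rule exI[of _ Q'])
      using n h by linarith
  qed
qed

end
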